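(* Let $n$ be an odd prime and $\omega_n=e^{2\pi i/n}$. Define $$A_n=\{\Re(\omega_n),\Re(\omega_n^2),\dots,\Re(\omega_n^{(n-1)/2})\},\qquad B_n=\{i\,\Im(\omega_n), i\,\Im(\omega_n^2),\dots,i\,\Im(\omega_n^{(n-1)/2})\}.$$ Then $A_n\cup B_n$ is a basis for the cyclotomic field $\mathbb{Q}(\omega_n)$ as a vector space over $\mathbb{Q}$.
   Context: $\Re$ and $\Im$ denote real and imaginary parts of a complex number. *)

theory Defs
  imports Complex_Main "HOL-Computational_Algebra.Primes"
begin

definition complex_subfield :: "complex set \<Rightarrow> bool" where
  "complex_subfield S \<longleftrightarrow> 0 \<in> S \<and> 1 \<in> S \<and>
     (\<forall>x\<in>S. \<forall>y\<in>S. x + y \<in> S \<and> x - y \<in> S \<and> x * y \<in> S) \<and>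
     (\<forall>x\<in>S. x \<noteq> 0 \<longrightarrow> inverse x \<in> S)"

text \<open>The field Q(a): the smallest subfield of C containing a (every subfield contains Q).\<close>
definition rat_adjoin :: "complex \<Rightarrow> complex set" where
  "rat_adjoin a = \<Inter>{S. complex_subfield S \<and> a \<in> S}"

definition rat_basis :: "complex set \<Rightarrow> complex set \<Rightarrow> bool" where
  "rat_basis S F \<longleftrightarrow> finite S \<and> S \<subseteq> F \<and>
     (\<forall>c :: complex \<Rightarrow> rat. (\<Sum>x\<in>S. of_rat (c x) * x) = 0 \<longrightarrow> (\<forall>x\<in>S. c x = 0)) \<and>
     (\<forall>z\<in>F. \<exists>c :: complex \<Rightarrow> rat. z = (\<Sum>x\<in>S. of_rat (c x) * x))"

end

theory Submission
  imports Defs "HOL-Computational_Algebra.Computational_Algebra" "HOL-Computational_Algebra.Field_as_Ring"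
begin

abbreviation mp :: "rat poly \<Rightarrow> complex poly" where "mp \<equiv> map_poly of_rat"

lemma mp_add: "mp (p + q) = mp p + mp q"
  by (rule poly_eqI) (simp add: coeff_map_poly of_rat_add)
lemma mp_diff: "mp (p - q) = mp p - mp q"
  by (rule poly_eqI) (simp add: coeff_map_poly of_rat_diff)
lemma mp_mult: "mp (p * q) = mp p * mp q"
  by (rule poly_eqI) (simp add: coeff_map_poly coeff_mult of_rat_sum of_rat_mult)
lemma mi_mult: "map_poly (of_int :: int \<Rightarrow> rat) (p * q) = map_poly of_int p * map_poly of_int q"
  by (rule poly_eqI) (simp add: coeff_map_poly coeff_mult)
lemma mi_inj: "map_poly (of_int :: int \<Rightarrow> rat) p = map_poly of_int q \<Longrightarrow> p = q"
proof (rule poly_eqI)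
  fix k assume "map_poly (of_int :: int \<Rightarrow> rat) p = map_poly of_int q"
  from arg_cong[OF this, of "\<lambda>r. coeff r k"] show "coeff p k = coeff q k"
    by (simp add: coeff_map_poly)
qed

lemma poly_mp_pcompose: "poly (mp (p \<circ>\<^sub>p q)) x = poly (mp p) (poly (mp q) x)"
  by (induct p rule: pCons_induct) (simp_all add: pcompose_pCons mp_add mp_mult map_poly_pCons)

lemma coeff_monom_sum: "coeff (\<Sum>j<N. monom (c j) j) k = (if k < N then c k else 0)"
  by (simp add: coeff_sum coeff_monom)

lemma eisenstein_F:
  fixes p :: nat and g h :: "int poly"
  assumes pr: "prime p" and gh: "g * h = (\<Sum>j<p. monom (int (p choose Suc j)) j)"
  shows "degree g = 0 \<or> degree h = 0"
proof (rule ccontr)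
  let ?F = "(\<Sum>j<p. monom (int (p choose Suc j)) j)"
  assume "\<not> (degree g = 0 \<or> degree h = 0)"
  hence dg: "degree g > 0" and dh: "degree h > 0" by auto
  have p1: "p > 1" using pr prime_gt_1_nat by blast
  have cF: "coeff ?F k = (if k < p then int (p choose Suc k) else 0)" for k
    by (simp add: coeff_monom_sum)
  have gnz: "g \<noteq> 0" and hnz: "h \<noteq> 0" using dg dh by auto
  have degF: "degree ?F = p - 1"
  proof (rule antisym)
    show "degree ?F \<le> p-1" by (rule degree_le) (auto simp: cF)
    show "p - 1 \<le> degree ?F" by (rule le_degree) (use p1 in \<open>simp add: cF\<close>)
  qed
  have dgh: "degree g + degree h = p - 1"
    using degree_mult_eq[OF gnz hnz] gh degF by simp
  have lc: "lead_coeff g * lead_coeff h = 1"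
    using lead_coeff_mult[of g h] gh degF p1 by (simp add: cF)
  define P where "P = int p"
  have pi: "prime P" using pr by (simp add: P_def)
  have Pnz: "P \<noteq> 0" using pi by auto
  have ndvd1: "\<not> P dvd 1" using pi by (meson not_prime_unit)
  have ng: "\<not> P dvd lead_coeff g"
  proof
    assume "P dvd lead_coeff g" then have "P dvd 1" using lc by (metis dvd_mult2)
    then show False using ndvd1 by simp
  qed
  have nh: "\<not> P dvd lead_coeff h"
  proof
    assume "P dvd lead_coeff h" then have "P dvd 1" using lc by (metis dvd_mult)
    then show False using ndvd1 by simp
  qed
  define i0 where "i0 = (LEAST i. \<not> P dvd coeff g i)"
  define j0 where "j0 = (LEAST i. \<not> P dvd coeff h i)"
  have i0le: "i0 \<le> degree g" unfolding i0_def by (rule Least_le) (use ng in simp)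
  have j0le: "j0 \<le> degree h" unfolding j0_def by (rule Least_le) (use nh in simp)
  have gi0: "\<not> P dvd coeff g i0" unfolding i0_def by (rule LeastI) (use ng in simp)
  have hj0: "\<not> P dvd coeff h j0" unfolding j0_def by (rule LeastI) (use nh in simp)
  have gi: "P dvd coeff g i" if "i < i0" for i using not_less_Least[OF that[unfolded i0_def]] i0_def by simp
  have hj: "P dvd coeff h i" if "i < j0" for i using not_less_Least[OF that[unfolded j0_def]] j0_def by simp
  have key: "P dvd coeff (g*h) (i0+j0) - coeff g i0 * coeff h j0"
  proof -
    have "coeff (g*h) (i0+j0) = (\<Sum>i\<le>i0+j0. coeff g i * coeff h (i0+j0-i))"
      by (simp add: coeff_mult)
    also have "\<dots> = coeff g i0 * coeff h j0 + (\<Sum>i\<in>{..i0+j0}-{i0}. coeff g i * coeff h (i0+j0-i))"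
      by (subst sum.remove[of _ i0]) auto
    finally have eq: "coeff (g*h) (i0+j0) - coeff g i0 * coeff h j0 = (\<Sum>i\<in>{..i0+j0}-{i0}. coeff g i * coeff h (i0+j0-i))"
      by simp
    have "P dvd (\<Sum>i\<in>{..i0+j0}-{i0}. coeff g i * coeff h (i0+j0-i))"
    proof (rule dvd_sum)
      fix i assume "i \<in> {..i0+j0}-{i0}"
      then have "i < i0 \<or> i0 + j0 - i < j0" by auto
      then show "P dvd coeff g i * coeff h (i0+j0-i)"
      proof
        assume "i < i0" then show ?thesis using gi[of i] by (simp add: dvd_mult2)
      next
        assume "i0 + j0 - i < j0" then show ?thesis using hj[of "i0+j0-i"] by (simp add: dvd_mult)
      qed
    qed
    then show ?thesis using eq by simp
  qed
  have ge: "i0 + j0 \<ge> p - 1"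
  proof (rule ccontr)
    assume "\<not> i0 + j0 \<ge> p - 1"
    then have lt: "i0 + j0 < p - 1" by simp
    have "p dvd p choose Suc (i0+j0)"
      by (rule dvd_choose_prime) (use lt pr in auto)
    then have d1: "P dvd int (p choose Suc (i0+j0))" unfolding P_def by simp
    have "coeff (g*h) (i0+j0) = int (p choose Suc (i0+j0))"
      unfolding gh cF using lt by simp
    with d1 have "P dvd coeff (g*h) (i0+j0)" by simp
    from dvd_diff[OF this key] have "P dvd coeff g i0 * coeff h j0" by simp
    then show False using prime_dvd_multD[OF pi] gi0 hj0 by blast
  qed
  have "i0 = degree g" "j0 = degree h" using ge dgh i0le j0le by auto
  then have "P dvd coeff g 0" "P dvd coeff h 0" using gi hj dg dh by auto
  then have "P * P dvd coeff g 0 * coeff h 0" by (rule mult_dvd_mono)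
  also have "coeff g 0 * coeff h 0 = P"
  proof -
    have "coeff g 0 * coeff h 0 = coeff (g*h) 0" by (simp add: coeff_mult_0)
    also have "\<dots> = int (p choose 1)" unfolding gh cF using p1 by simp
    finally show ?thesis by (simp add: P_def)
  qed
  finally have "P * P dvd P * 1" by simp
  then have "P dvd 1" using Pnz by (subst (asm) dvd_mult_cancel_left) auto
  then show False using ndvd1 by simp
qed


lemma clear_denom:
  fixes p :: "rat poly"
  shows "\<exists>a::int. a > 0 \<and> (\<exists>q. smult (of_int a) p = map_poly of_int q)"
proof (induct p rule: pCons_induct)
  case 0 show ?case by (rule exI[of _ 1], simp, rule exI[of _ 0], simp)
next
  case (pCons c p)
  then obtain a q where a: "a > 0" "smult (of_int a) p = map_poly of_int q" by blast
  obtain x y where xy: "quotient_of c = (x,y)" by (cases "quotient_of c")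
  have y: "y > 0" using quotient_of_denom_pos[OF xy] .
  have c: "c = of_int x / of_int y" using quotient_of_div[OF xy] .
  have ca: "of_int a * coeff p k = of_int (coeff q k)" for k
    using arg_cong[OF a(2), of "\<lambda>r. coeff r k"] by (simp add: coeff_map_poly)
  have "smult (of_int (a*y)) (pCons c p) = map_poly of_int (pCons (a*x) (smult y q))"
  proof (rule poly_eqI)
    fix k show "coeff (smult (of_int (a*y)) (pCons c p)) k = coeff (map_poly of_int (pCons (a*x) (smult y q))) k"
    proof (cases k)
      case 0 then show ?thesis using y by (simp add: coeff_map_poly c)
    next
      case (Suc j)
      have "of_int (a*y) * coeff p j = of_int y * (of_int a * coeff p j)" by simp
      then show ?thesis using Suc by (simp add: coeff_map_poly ca)
    qed
  qed
  moreover have "a*y > 0" using a y by simp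
  ultimately show ?case by blast
qed

definition Fz :: "nat \<Rightarrow> int poly" where "Fz p = (\<Sum>j<p. monom (int (p choose Suc j)) j)"
definition Fq :: "nat \<Rightarrow> rat poly" where "Fq p = (\<Sum>j<p. monom (of_nat (p choose Suc j)) j)"

lemma coeff_Fq: "coeff (Fq p) k = (if k < p then of_nat (p choose Suc k) else 0)"
  by (simp add: Fq_def coeff_monom_sum)

lemma Fq_Fz: "Fq p = map_poly of_int (Fz p)"
  by (rule poly_eqI) (simp add: Fq_def Fz_def coeff_map_poly coeff_monom_sum)

lemma content_Fz:
  assumes "prime p" shows "content (Fz p) = 1"
proof -
  have p: "p > 0" using assms prime_gt_0_nat by blast
  have "content (Fz p) dvd coeff (Fz p) (p-1)" by (rule content_dvd_coeff)
  moreover have "coeff (Fz p) (p-1) = 1" using p by (simp add: Fz_def coeff_monom_sum)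
  ultimately have "content (Fz p) dvd 1" by metis
  then show ?thesis by (metis is_unit_normalize normalize_content)
qed

lemma Fq_factor:
  assumes pr: "prime p" and fac: "Fq p = g * h"
  shows "degree g = 0 \<or> degree h = 0"
proof -
  obtain a g' where a: "a > 0" "smult (of_int a) g = map_poly of_int g'" using clear_denom by blast
  obtain b h' where b: "b > 0" "smult (of_int b) h = map_poly of_int h'" using clear_denom by blast
  have "map_poly of_int (g' * h') = map_poly (of_int::int\<Rightarrow>rat) (smult (a*b) (Fz p))"
  proof -
    have "map_poly (of_int::int\<Rightarrow>rat) (g' * h') = smult (of_int a) g * smult (of_int b) h"
      by (simp add: mi_mult a b)
    also have "\<dots> = smult (of_int (a*b)) (Fq p)" by (simp add: fac ac_simps)
    also have "\<dots> = map_poly of_int (smult (a*b) (Fz p))"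
      by (simp add: Fq_Fz map_poly_smult)
    finally show ?thesis .
  qed
  hence eq: "g' * h' = smult (a*b) (Fz p)" by (rule mi_inj)
  have cont: "content g' * content h' = a * b"
  proof -
    have "content g' * content h' = content (g' * h')" by (simp add: content_mult)
    also have "\<dots> = normalize (a*b) * content (Fz p)" by (simp add: eq content_smult)
    also have "\<dots> = a * b" using a b content_Fz[OF pr] by simp
    finally show ?thesis .
  qed
  have "smult (a*b) (Fz p) = smult (a*b) (primitive_part g' * primitive_part h')"
  proof -
    have "smult (a*b) (Fz p) = smult (content g') (primitive_part g') * smult (content h') (primitive_part h')"
      by (simp add: eq[symmetric] content_times_primitive_part)
    also have "\<dots> = smult (content g' * content h') (primitive_part g' * primitive_part h')"
      by (simp del: content_times_primitive_part add: mult_smult_left mult_smult_right mult.commute)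
    finally show ?thesis by (simp add: cont)
  qed
  hence "Fz p = primitive_part g' * primitive_part h'"
    by (rule smult_cancel[rotated]) (use a b in simp)
  from eisenstein_F[OF pr this[unfolded Fz_def, symmetric]]
  have "degree g' = 0 \<or> degree h' = 0" by simp
  moreover have "degree g' = degree g"
    using arg_cong[OF a(2), of degree] a(1) by (simp add: degree_map_poly)
  moreover have "degree h' = degree h"
    using arg_cong[OF b(2), of degree] b(1) by (simp add: degree_map_poly)
  ultimately show ?thesis by simp
qed

lemma Fq_irred:
  assumes pr: "prime p" shows "irreducible (Fq p)"
proof -
  have p1: "p > 1" using pr prime_gt_1_nat by blast
  have c1: "coeff (Fq p) (p-1) = 1" using p1 by (simp add: coeff_Fq)
  have nz: "Fq p \<noteq> 0" using c1 by auto
  have deg: "degree (Fq p) \<ge> p - 1" using c1 le_degree[of "Fq p" "p-1"] by simp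
  show ?thesis
  proof (rule irreducibleI)
    show "Fq p \<noteq> 0" by (fact nz)
    show "\<not> is_unit (Fq p)" using nz deg p1 by (simp add: is_unit_iff_degree)
    fix g h assume gh: "Fq p = g * h"
    then have "g \<noteq> 0" "h \<noteq> 0" using nz by auto
    with Fq_factor[OF pr gh] show "is_unit g \<or> is_unit h" by (auto simp: is_unit_iff_degree)
  qed
qed


locale cyc =
  fixes n :: nat
  assumes pr: "prime n" and od: "odd n"
begin

definition w :: complex where "w = exp (2 * of_real pi * \<i> / of_nat n)"
definition m :: nat where "m = (n - 1) div 2"
abbreviation th where "th \<equiv> w - 1"

lemma n_ge3: "n \<ge> 3"
proof -
  have "n \<ge> 2" using pr prime_ge_2_nat by blast
  moreover have "n \<noteq> 2" using od by auto
  ultimately show ?thesis by simp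
qed

lemma n_eq: "n = 2*m+1" using od unfolding m_def by presburger
lemma m_ge1: "m \<ge> 1" using n_eq n_ge3 by simp

lemma w_cis: "w = cis (2*pi/n)"
proof -
  have "2 * of_real pi * \<i> / of_nat n = \<i> * complex_of_real (2*pi/n)"
    by (simp add: field_simps)
  then show ?thesis by (simp add: w_def cis_conv_exp mult_ac)
qed

lemma w_pow: "w^k = cis (real k * (2*pi/n))" by (simp add: w_cis DeMoivre)

lemma w_n: "w^n = 1"
proof -
  have "real n * (2*pi/n) = 2*pi" using n_ge3 by simp
  then show ?thesis by (simp add: w_pow complex_eq_iff)
qed

lemma w_nz: "w \<noteq> 0" by (simp add: w_def)

lemma w_ne1: "w \<noteq> 1"
proof -
  have "0 < 2*pi/n" using n_ge3 by simp
  moreover have "2*pi/n < pi" using n_ge3 by (simp add: field_simps)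
  ultimately have "sin (2*pi/n) > 0" by (rule sin_gt_zero)
  then have "Im w \<noteq> 0" by (simp add: w_cis)
  then show ?thesis by auto
qed

lemma th_nz: "th \<noteq> 0" using w_ne1 by simp

lemma w_mod: "w^k = w^(k mod n)"
proof -
  have "w^k = w^(n*(k div n) + k mod n)" by simp
  also have "\<dots> = (w^n)^(k div n) * w^(k mod n)" by (simp only: power_add power_mult)
  finally show ?thesis by (simp add: w_n)
qed

lemma norm_w: "norm (w^k) = 1" by (simp add: w_pow)

lemma cnj_w: assumes "k \<le> n" shows "cnj (w^k) = w^(n-k)"
proof -
  have "w^k * cnj (w^k) = 1"
    using complex_norm_square[of "w^k"] norm_w[of k] by simp
  moreover have "w^k * w^(n-k) = 1" using assms by (simp add: power_add[symmetric] w_n)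
  moreover have "w^k \<noteq> 0" using w_nz by simp
  ultimately show ?thesis by (metis mult_left_cancel)
qed

lemma sum_w: "(\<Sum>j<n. w^j) = 0"
  using w_ne1 by (simp add: sum_gp_strict w_n)

definition ev :: "rat poly \<Rightarrow> complex" where "ev p = poly (mp p) th"

lemma ev_add: "ev (p + q) = ev p + ev q" by (simp add: ev_def mp_add)
lemma ev_diff: "ev (p - q) = ev p - ev q" by (simp add: ev_def mp_diff)
lemma ev_mult: "ev (p * q) = ev p * ev q" by (simp add: ev_def mp_mult)
lemma ev_const: "ev [:a:] = of_rat a" by (simp add: ev_def map_poly_pCons)
lemma ev_one: "ev 1 = 1" by (simp add: ev_def)

lemma mp_monom_sum: "mp (\<Sum>j<N. monom (c j) j) = (\<Sum>j<N. monom (of_rat (c j)) j)"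
  by (rule poly_eqI) (simp add: coeff_map_poly coeff_monom_sum)

lemma poly_monom_sum: "poly (\<Sum>j<N. monom (c j) j) (x::complex) = (\<Sum>j<N. c j * x^j)"
  by (simp add: poly_sum poly_monom)

lemma F_root: "ev (Fq n) = 0"
proof -
  have "ev (Fq n) = (\<Sum>j<n. of_nat (n choose Suc j) * th^j)"
    unfolding ev_def Fq_def mp_monom_sum poly_monom_sum by simp
  moreover have "th * (\<Sum>j<n. of_nat (n choose Suc j) * th^j) = 0"
  proof -
    have bin: "(\<Sum>k<Suc n. of_nat (n choose k) * x^k) = (x+1)^n" for x :: complex
      by (simp add: binomial_ring lessThan_Suc_atMost)
    have "th * (\<Sum>j<n. of_nat (n choose Suc j) * th^j) = (\<Sum>j<n. of_nat (n choose Suc j) * th^Suc j)"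
      unfolding sum_distrib_left by (intro sum.cong refl) (simp add: mult.left_commute)
    also have "\<dots> = (\<Sum>k<Suc n. of_nat (n choose k) * th^k) - 1"
      by (simp only: sum.lessThan_Suc_shift) simp
    also have "(\<Sum>k<Suc n. of_nat (n choose k) * th^k) = (th + 1)^n"
      by (rule bin)
    also have "(th + 1)^n = 1" by (simp add: w_n)
    finally show ?thesis by simp
  qed
  ultimately show ?thesis using th_nz by simp
qed

lemma Fq_prime: "prime_elem (Fq n)"
  using Fq_irred[OF pr] by (rule field_poly_irreducible_imp_prime)

lemma bezout_ev:
  assumes "\<not> Fq n dvd r" shows "\<exists>u. ev u * ev r = 1"
proof -
  have "coprime (Fq n) r" using prime_elem_imp_coprime[OF Fq_prime assms] .
  then have "gcd (Fq n) r = 1" by simp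
  then have "fst (bezout_coefficients (Fq n) r) * Fq n + snd (bezout_coefficients (Fq n) r) * r = 1"
    using bezout_coefficients_fst_snd[of "Fq n" r] by simp
  from arg_cong[OF this, of ev] show ?thesis
    by (auto simp: ev_add ev_mult F_root ev_one)
qed

lemma ev_zero_dvd: "ev r = 0 \<Longrightarrow> Fq n dvd r"
  using bezout_ev by force

lemma ev_inv: assumes "ev r \<noteq> 0" shows "\<exists>u. ev u * ev r = 1"
proof (rule bezout_ev)
  show "\<not> Fq n dvd r"
  proof
    assume "Fq n dvd r" then obtain k where "r = Fq n * k" by (auto elim: dvdE)
    then have "ev r = 0" by (simp add: ev_mult F_root)
    with assms show False by simp
  qed
qed

lemma degree_Fq: "degree (Fq n) = n - 1"
proof (rule antisym)
  show "degree (Fq n) \<le> n-1" by (rule degree_le) (auto simp: coeff_Fq)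
  have "coeff (Fq n) (n-1) \<noteq> 0" using n_ge3 by (simp add: coeff_Fq)
  then show "n - 1 \<le> degree (Fq n)" by (rule le_degree)
qed

lemma indep0:
  assumes "(\<Sum>j<n-1. of_rat (c j) * w^j) = 0" "j < n - 1"
  shows "c j = 0"
proof -
  define p where "p = (\<Sum>j<n-1. monom (c j) j)"
  define r where "r = p \<circ>\<^sub>p [:1,1:]"
  have "ev r = poly (mp p) w" unfolding ev_def r_def poly_mp_pcompose by (simp add: map_poly_pCons)
  also have "\<dots> = 0" unfolding p_def mp_monom_sum poly_monom_sum using assms(1) by simp
  finally have "Fq n dvd r" by (rule ev_zero_dvd)
  have "p = 0"
  proof (rule ccontr)
    assume "p \<noteq> 0"
    then have rnz: "r \<noteq> 0" unfolding r_def using pcompose_eq_0[of p "[:1,1:]"] by auto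
    have "degree p \<le> n - 2" unfolding p_def by (rule degree_le) (auto simp: coeff_monom_sum)
    then have "degree r \<le> n - 2" by (simp add: r_def degree_pcompose)
    moreover have "degree (Fq n) \<le> degree r" using dvd_imp_degree_le[OF \<open>Fq n dvd r\<close> rnz] .
    ultimately show False using degree_Fq n_ge3 by simp
  qed
  then have "coeff p j = 0" by simp
  then show ?thesis using assms(2) by (simp add: p_def coeff_monom_sum)
qed

lemma indep1:
  assumes "(\<Sum>j\<in>{1..n-1}. of_rat (c j) * w^j) = 0" "j \<in> {1..n-1}"
  shows "c j = 0"
proof -
  have eq: "{1..n-1} = Suc ` {..<n-1}" using image_Suc_lessThan[of "n-1"] by simp
  have "(\<Sum>j\<in>{1..n-1}. of_rat (c j) * w^j) = (\<Sum>i<n-1. of_rat (c (Suc i)) * w^Suc i)"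
    unfolding eq by (subst sum.reindex) auto
  also have "\<dots> = w * (\<Sum>i<n-1. of_rat (c (Suc i)) * w^i)"
    by (simp add: sum_distrib_left mult_ac)
  finally have "(\<Sum>i<n-1. of_rat (c (Suc i)) * w^i) = 0" using assms(1) w_nz by simp
  moreover obtain i where "j = Suc i" "i < n - 1" using assms(2) by (cases j) auto
  ultimately show ?thesis using indep0[of "\<lambda>i. c (Suc i)" i] by simp
qed

end


context cyc
begin

definition V :: "complex set" where "V = range ev"

lemma ev_pC: "ev [:a, b:] = of_rat a + of_rat b * th"
  by (simp add: ev_def map_poly_pCons)

lemma V_subfield: "complex_subfield V"
  unfolding complex_subfield_def
proof (intro conjI ballI impI)
  show "0 \<in> V" unfolding V_def using ev_const[of 0] by (metis of_rat_0 rangeI)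
  show "1 \<in> V" unfolding V_def using ev_one by (metis rangeI)
  fix x y assume "x \<in> V" "y \<in> V"
  then obtain p q where x: "x = ev p" and y: "y = ev q" unfolding V_def by auto
  show "x + y \<in> V" unfolding V_def x y ev_add[symmetric] by simp
  show "x - y \<in> V" unfolding V_def x y ev_diff[symmetric] by simp
  show "x * y \<in> V" unfolding V_def x y ev_mult[symmetric] by simp
next
  fix x assume "x \<in> V" "x \<noteq> 0"
  then obtain p where x: "x = ev p" unfolding V_def by auto
  then obtain u where "ev u * ev p = 1" using ev_inv \<open>x \<noteq> 0\<close> by blast
  then have "inverse x = ev u" unfolding x by (simp add: inverse_unique mult.commute)
  then show "inverse x \<in> V" unfolding V_def by simp
qed

lemma w_in_V: "w \<in> V"
proof -
  have "w = ev [:1,1:]" by (simp add: ev_pC)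
  then show ?thesis unfolding V_def by simp
qed

lemma adjoin_sub_V: "rat_adjoin w \<subseteq> V"
  unfolding rat_adjoin_def using V_subfield w_in_V by blast

lemma split0: "(\<Sum>j<n. g j) = g 0 + (\<Sum>j\<in>{1..n-1}. g j)"
proof -
  have "{..<n} = insert 0 {1..n-1}" using n_ge3 by auto
  then show ?thesis by simp
qed

definition W :: "complex set" where "W = {\<Sum>j<n. of_rat (c j) * w^j | c. True}"

lemma W_I: "(\<Sum>j<n. of_rat (c j) * w^j) \<in> W" unfolding W_def by blast

lemma W_add: assumes "x \<in> W" "y \<in> W" shows "x + y \<in> W"
proof -
  obtain c d where x: "x = (\<Sum>j<n. of_rat (c j) * w^j)" and y: "y = (\<Sum>j<n. of_rat (d j) * w^j)"
    using assms unfolding W_def by auto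
  have "x + y = (\<Sum>j<n. of_rat (c j + d j) * w^j)"
    unfolding x y by (simp add: sum.distrib of_rat_add distrib_right)
  then show ?thesis using W_I[of "\<lambda>j. c j + d j"] by simp
qed

lemma W_smult: assumes "x \<in> W" shows "of_rat a * x \<in> W"
proof -
  obtain c where x: "x = (\<Sum>j<n. of_rat (c j) * w^j)"
    using assms unfolding W_def by auto
  have "of_rat a * x = (\<Sum>j<n. of_rat (a * c j) * w^j)"
    unfolding x by (simp add: sum_distrib_left of_rat_mult mult_ac)
  then show ?thesis using W_I[of "\<lambda>j. a * c j"] by simp
qed

lemma W_diff: assumes "x \<in> W" "y \<in> W" shows "x - y \<in> W"
  using W_add[OF assms(1) W_smult[OF assms(2), of "-1"]] by (simp add: of_rat_minus)

lemma W_const: "of_rat a \<in> W"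
proof -
  have "(\<Sum>j<n. of_rat (if j = 0 then a else 0) * w^j) = of_rat a"
  proof -
    have "(\<Sum>j\<in>{1..n-1}. of_rat (if j = 0 then a else 0) * w^j) = (0::complex)"
      by (rule sum.neutral) auto
    then show ?thesis using split0[of "\<lambda>j. of_rat (if j = 0 then a else 0) * w^j"] by simp
  qed
  then show ?thesis using W_I[of "\<lambda>j. if j = 0 then a else 0"] by simp
qed

lemma W_mult_w: assumes "x \<in> W" shows "w * x \<in> W"
proof -
  obtain c where x: "x = (\<Sum>j<n. of_rat (c j) * w^j)"
    using assms unfolding W_def by auto
  define N where "N = n - 1"
  have nN: "n = Suc N" using n_ge3 unfolding N_def by simp
  have nset: "{..<n} = {..<Suc N}" using nN by simp
  have wN: "w^Suc N = 1" unfolding nN[symmetric] by (rule w_n)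
  define c' where "c' i = (if i = 0 then c N else c (i - 1))" for i
  have "w * x = (\<Sum>j<Suc N. of_rat (c j) * w^Suc j)"
    unfolding x nset sum_distrib_left by (intro sum.cong refl) (simp add: mult_ac)
  also have "\<dots> = (\<Sum>j<N. of_rat (c j) * w^Suc j) + of_rat (c N)"
    using wN by simp
  also have "\<dots> = (\<Sum>i<Suc N. of_rat (c' i) * w^i)"
    by (simp only: sum.lessThan_Suc_shift) (simp add: c'_def)
  finally have "w * x = (\<Sum>i<n. of_rat (c' i) * w^i)" unfolding nset .
  then show ?thesis using W_I[of c'] by simp
qed

lemma V_sub_W: "ev p \<in> W"
proof (induct p rule: pCons_induct)
  case 0 then show ?case using W_const[of 0] by (simp add: ev_def)
next
  case (pCons a p)
  have "ev (pCons a p) = of_rat a + (w * ev p - ev p)"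
    using pCons(1) by (simp add: ev_def map_poly_pCons algebra_simps)
  then show ?case using W_add[OF W_const W_diff[OF W_mult_w[OF pCons(2)] pCons(2)]] by simp
qed

lemma W_repr: assumes "z \<in> W" shows "\<exists>d. z = (\<Sum>j\<in>{1..n-1}. of_rat (d j) * w^j)"
proof -
  obtain c where z: "z = (\<Sum>j<n. of_rat (c j) * w^j)"
    using assms unfolding W_def by auto
  have s: "(\<Sum>j\<in>{1..n-1}. w^j) = - 1" using sum_w split0[of "\<lambda>j. w^j"] by (simp add: eq_neg_iff_add_eq_0 add.commute)
  have "z = of_rat (c 0) + (\<Sum>j\<in>{1..n-1}. of_rat (c j) * w^j)"
    unfolding z split0[of "\<lambda>j. of_rat (c j) * w^j"] by simp
  also have "of_rat (c 0) = - of_rat (c 0) * (\<Sum>j\<in>{1..n-1}. w^j)" using s by simp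
  also have "\<dots> + (\<Sum>j\<in>{1..n-1}. of_rat (c j) * w^j) = (\<Sum>j\<in>{1..n-1}. of_rat (c j - c 0) * w^j)"
  proof -
    have "(\<Sum>j\<in>{1..n-1}. of_rat (c j - c 0) * w^j) = (\<Sum>j\<in>{1..n-1}. of_rat (c j) * w^j) - of_rat (c 0) * (\<Sum>j\<in>{1..n-1}. w^j)"
      by (simp add: of_rat_diff left_diff_distrib sum_subtractf sum_distrib_left)
    then show ?thesis by simp
  qed
  finally show ?thesis by (intro exI[of _ "\<lambda>j. c j - c 0"])
qed

end


context cyc
begin

lemma SPLIT:
  "(\<Sum>k\<in>{1..m}. of_rat (u k) * w^k + of_rat (v k) * w^(n-k)) =
   (\<Sum>j\<in>{1..n-1}. of_rat (if j \<le> m then u j else v (n-j)) * w^j)"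
proof -
  have U: "{1..n-1} = {1..m} \<union> (\<lambda>k. n - k) ` {1..m}"
  proof
    show "{1..n-1} \<subseteq> {1..m} \<union> (\<lambda>k. n - k) ` {1..m}"
    proof
      fix x assume x: "x \<in> {1..n-1}"
      show "x \<in> {1..m} \<union> (\<lambda>k. n - k) ` {1..m}"
      proof (cases "x \<le> m")
        case True then show ?thesis using x by auto
      next
        case False
        then have "n - x \<in> {1..m}" "x = n - (n - x)" using x n_eq by auto
        then show ?thesis by blast
      qed
    qed
    show "{1..m} \<union> (\<lambda>k. n - k) ` {1..m} \<subseteq> {1..n-1}" using n_eq by auto
  qed
  have D: "{1..m} \<inter> (\<lambda>k. n - k) ` {1..m} = {}" using n_eq by auto
  have inj: "inj_on (\<lambda>k. n - k) {1..m}" using n_eq by (auto simp: inj_on_def)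
  define g where "g j = of_rat (if j \<le> m then u j else v (n-j)) * w^j" for j
  have "(\<Sum>j\<in>{1..n-1}. g j) = (\<Sum>j\<in>{1..m}. g j) + (\<Sum>j\<in>(\<lambda>k. n-k) ` {1..m}. g j)"
    unfolding U by (rule sum.union_disjoint) (use D in auto)
  also have "(\<Sum>j\<in>(\<lambda>k. n-k) ` {1..m}. g j) = (\<Sum>k\<in>{1..m}. g (n-k))"
    by (rule sum.reindex[OF inj, unfolded comp_def])
  also have "(\<Sum>k\<in>{1..m}. g (n-k)) = (\<Sum>k\<in>{1..m}. of_rat (v k) * w^(n-k))"
    by (rule sum.cong) (use n_eq in \<open>auto simp: g_def\<close>)
  also have "(\<Sum>j\<in>{1..m}. g j) = (\<Sum>k\<in>{1..m}. of_rat (u k) * w^k)"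
    by (rule sum.cong) (auto simp: g_def)
  finally show ?thesis by (simp add: sum.distrib g_def)
qed

lemma COEF:
  assumes "(\<Sum>k\<in>{1..m}. of_rat (u k) * w^k + of_rat (v k) * w^(n-k)) = 0" "k \<in> {1..m}"
  shows "u k = 0 \<and> v k = 0"
proof -
  have z: "(\<Sum>j\<in>{1..n-1}. of_rat (if j \<le> m then u j else v (n-j)) * w^j) = 0"
    using assms(1) SPLIT by simp
  have "(if k \<le> m then u k else v (n-k)) = 0"
    using indep1[OF z, of k] assms(2) n_eq by auto
  moreover have "(if n - k \<le> m then u (n - k) else v (n-(n-k))) = 0"
    using indep1[OF z, of "n-k"] assms(2) n_eq by auto
  ultimately show ?thesis using assms(2) n_eq by (auto split: if_splits)
qed

definition e :: "nat \<Rightarrow> bool \<Rightarrow> complex" where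
  "e k t = (w^k + (if t then 1 else -1) * w^(n-k)) / 2"
definition I :: "(nat \<times> bool) set" where "I = {1..m} \<times> UNIV"
definition f :: "nat \<times> bool \<Rightarrow> complex" where "f = (\<lambda>(k,t). e k t)"

lemma f_apply: "f (k,t) = e k t" by (simp add: f_def)

lemma re_w: assumes "k \<le> n" shows "complex_of_real (Re (w^k)) = e k True"
proof -
  have "w^k + cnj (w^k) = 2 * complex_of_real (Re (w^k))" using complex_add_cnj[of "w^k"] by simp
  then show ?thesis using cnj_w[OF assms] by (simp add: e_def field_simps)
qed

lemma im_w: assumes "k \<le> n" shows "\<i> * complex_of_real (Im (w^k)) = e k False"
proof -
  have "w^k - cnj (w^k) = 2 * (\<i> * complex_of_real (Im (w^k)))" using complex_diff_cnj[of "w^k"] by simp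
  then show ?thesis using cnj_w[OF assms] by (simp add: e_def field_simps)
qed

lemma AB: "{complex_of_real (Re (w ^ k)) | k. 1 \<le> k \<and> k \<le> (n - 1) div 2} \<union>
           {\<i> * complex_of_real (Im (w ^ k)) | k. 1 \<le> k \<and> k \<le> (n - 1) div 2} = f ` I"
proof -
  have le: "k \<le> m \<Longrightarrow> k \<le> n" for k using n_eq by simp
  show ?thesis
  proof
    show "{complex_of_real (Re (w ^ k)) | k. 1 \<le> k \<and> k \<le> (n - 1) div 2} \<union>
           {\<i> * complex_of_real (Im (w ^ k)) | k. 1 \<le> k \<and> k \<le> (n - 1) div 2} \<subseteq> f ` I"
    proof
      fix x assume "x \<in> {complex_of_real (Re (w ^ k)) | k. 1 \<le> k \<and> k \<le> (n - 1) div 2} \<union>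
           {\<i> * complex_of_real (Im (w ^ k)) | k. 1 \<le> k \<and> k \<le> (n - 1) div 2}"
      then obtain k t where "x = e k t" "k \<in> {1..m}"
        unfolding m_def[symmetric] using re_w im_w le by auto
      then show "x \<in> f ` I" unfolding I_def using f_apply by (metis UNIV_I image_eqI mem_Sigma_iff)
    qed
    show "f ` I \<subseteq> {complex_of_real (Re (w ^ k)) | k. 1 \<le> k \<and> k \<le> (n - 1) div 2} \<union>
           {\<i> * complex_of_real (Im (w ^ k)) | k. 1 \<le> k \<and> k \<le> (n - 1) div 2}"
    proof
      fix x assume "x \<in> f ` I"
      then obtain k t where x: "x = e k t" "k \<in> {1..m}" unfolding I_def f_def by auto
      show "x \<in> {complex_of_real (Re (w ^ k)) | k. 1 \<le> k \<and> k \<le> (n - 1) div 2} \<union>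
           {\<i> * complex_of_real (Im (w ^ k)) | k. 1 \<le> k \<and> k \<le> (n - 1) div 2}"
      proof (cases t)
        case True then show ?thesis using x re_w[of k] le[of k] unfolding m_def by auto
      next
        case False then show ?thesis using x im_w[of k] le[of k] unfolding m_def by auto
      qed
    qed
  qed
qed

lemma f_inj: "inj_on f I"
proof (rule inj_onI)
  fix p q assume p: "p \<in> I" and q: "q \<in> I" and eq: "f p = f q"
  obtain k t where pk: "p = (k,t)" by (cases p)
  obtain k' t' where qk: "q = (k',t')" by (cases q)
  have k: "k \<in> {1..m}" "k' \<in> {1..m}" using p q pk qk I_def by auto
  have eq': "w^k + (if t then 1 else -1) * w^(n-k) = w^k' + (if t' then 1 else -1) * w^(n-k')"
    using eq pk qk by (simp add: f_def e_def)
  have kk: "k = k'"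
  proof (rule ccontr)
    assume ne: "k \<noteq> k'"
    define u where "u j = (if j = k then 1 else if j = k' then -1 else (0::rat))" for j
    define v where "v j = (if j = k then (if t then 1 else -1) else if j = k' then (if t' then -1 else 1) else (0::rat))" for j
    define X where "X = w^k + (if t then 1 else -1) * w^(n-k)"
    define Y where "Y = - (w^k' + (if t' then 1 else -1) * w^(n-k'))"
    have "(\<Sum>j\<in>{1..m}. of_rat (u j) * w^j + of_rat (v j) * w^(n-j)) =
          (\<Sum>j\<in>{1..m}. (if j = k then X else 0) + (if j = k' then Y else 0))"
      by (rule sum.cong) (auto simp: u_def v_def X_def Y_def ne)
    also have "\<dots> = X + Y" using k by (simp add: sum.distrib)
    also have "X + Y = 0" using eq' unfolding X_def Y_def by simp
    finally have "u k = 0 \<and> v k = 0" using COEF k(1) by blast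
    then show False by (simp add: u_def)
  qed
  have tt: "t = t'"
  proof (rule ccontr)
    assume "t \<noteq> t'"
    then have "w^(n-k) = 0" using eq' kk by (cases t) (auto simp: equal_neg_zero)
    then show False using w_nz by simp
  qed
  show "p = q" using pk qk kk tt by simp
qed

lemma sum_I: "(\<Sum>p\<in>I. g p) = (\<Sum>k\<in>{1..m}. g (k,True) + g (k,False))"
proof -
  have "(\<Sum>p\<in>I. g p) = (\<Sum>k\<in>{1..m}. \<Sum>t\<in>UNIV. g (k,t))"
    unfolding I_def by (subst sum.cartesian_product) simp
  also have "\<dots> = (\<Sum>k\<in>{1..m}. g (k,True) + g (k,False))" by (simp add: UNIV_bool add.commute)
  finally show ?thesis .
qed

lemma indep:
  assumes "(\<Sum>x\<in>f ` I. of_rat (c x) * x) = 0" "x \<in> f ` I"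
  shows "c x = 0"
proof -
  define \<alpha> where "\<alpha> k = c (e k True)" for k
  define \<beta> where "\<beta> k = c (e k False)" for k
  have "(\<Sum>x\<in>f ` I. of_rat (c x) * x) = (\<Sum>p\<in>I. of_rat (c (f p)) * f p)"
    by (simp add: sum.reindex[OF f_inj])
  also have "\<dots> = (\<Sum>k\<in>{1..m}. of_rat (\<alpha> k) * e k True + of_rat (\<beta> k) * e k False)"
    by (simp add: sum_I f_apply \<alpha>_def \<beta>_def)
  also have "\<dots> = (\<Sum>k\<in>{1..m}. of_rat ((\<alpha> k + \<beta> k)/2) * w^k + of_rat ((\<alpha> k - \<beta> k)/2) * w^(n-k))"
    by (rule sum.cong) (simp_all add: e_def of_rat_add of_rat_diff of_rat_divide field_simps)
  finally have z: "(\<Sum>k\<in>{1..m}. of_rat ((\<alpha> k + \<beta> k)/2) * w^k + of_rat ((\<alpha> k - \<beta> k)/2) * w^(n-k)) = 0"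
    using assms(1) by simp
  obtain k t where x: "x = e k t" "k \<in> {1..m}" using assms(2) by (auto simp: f_def I_def)
  from COEF[OF z x(2)] have "\<alpha> k = 0" "\<beta> k = 0" by auto
  then show ?thesis using x by (cases t) (simp_all add: \<alpha>_def \<beta>_def)
qed

lemma inv_f: "k \<in> {1..m} \<Longrightarrow> inv_into I f (e k t) = (k,t)"
  using inv_into_f_f[OF f_inj, of "(k,t)"] by (simp add: I_def f_apply)

lemma span:
  assumes "z \<in> rat_adjoin w" shows "\<exists>c. z = (\<Sum>x\<in>f ` I. of_rat (c x) * x)"
proof -
  have "z \<in> W" using adjoin_sub_V assms V_def V_sub_W by auto
  then obtain d where z: "z = (\<Sum>j\<in>{1..n-1}. of_rat (d j) * w^j)" using W_repr by blast
  have z2: "z = (\<Sum>k\<in>{1..m}. of_rat (d k) * w^k + of_rat (d (n-k)) * w^(n-k))"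
    unfolding z SPLIT by (rule sum.cong) (use n_eq in auto)
  define C where "C x = (case inv_into I f x of (k,t) \<Rightarrow> if t then d k + d (n-k) else d k - d (n-k))" for x
  have "(\<Sum>x\<in>f ` I. of_rat (C x) * x) = (\<Sum>p\<in>I. of_rat (C (f p)) * f p)"
    by (simp add: sum.reindex[OF f_inj])
  also have "\<dots> = (\<Sum>k\<in>{1..m}. of_rat (C (e k True)) * e k True + of_rat (C (e k False)) * e k False)"
    by (simp add: sum_I f_apply)
  also have "\<dots> = (\<Sum>k\<in>{1..m}. of_rat (d k) * w^k + of_rat (d (n-k)) * w^(n-k))"
  proof (rule sum.cong)
    fix k assume k: "k \<in> {1..m}"
    have Ce: "C (e k t) = (if t then d k + d (n-k) else d k - d (n-k))" for t
      by (simp add: C_def inv_f[OF k])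
    show "of_rat (C (e k True)) * e k True + of_rat (C (e k False)) * e k False =
          of_rat (d k) * w^k + of_rat (d (n-k)) * w^(n-k)"
      unfolding Ce by (simp add: e_def of_rat_add of_rat_diff field_simps)
  qed simp
  finally show ?thesis using z2 by metis
qed

lemma sub_pow: "complex_subfield S \<Longrightarrow> w \<in> S \<Longrightarrow> w^j \<in> S"
  by (induct j) (auto simp: complex_subfield_def)

lemma e_in: assumes S: "complex_subfield S" "w \<in> S" shows "e k t \<in> S"
proof -
  have one: "1 \<in> S" using S by (simp add: complex_subfield_def)
  have two: "(1::complex) + 1 \<in> S" using S(1) one unfolding complex_subfield_def by blast
  have nz: "(1::complex) + 1 \<noteq> 0" by simp
  have h: "inverse ((1::complex) + 1) \<in> S" using S(1) two nz unfolding complex_subfield_def by blast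
  have a: "w^k \<in> S" "w^(n-k) \<in> S" using sub_pow S by auto
  have X: "(if t then w^k + w^(n-k) else w^k - w^(n-k)) \<in> S" using a S by (simp add: complex_subfield_def)
  have "(if t then w^k + w^(n-k) else w^k - w^(n-k)) * inverse (1 + 1) \<in> S"
    using X h S(1) unfolding complex_subfield_def by blast
  moreover have "e k t = (if t then w^k + w^(n-k) else w^k - w^(n-k)) * inverse (1 + 1)"
    by (simp add: e_def field_simps)
  ultimately show ?thesis by metis
qed

lemma sub: "f ` I \<subseteq> rat_adjoin w"
  unfolding rat_adjoin_def f_def using e_in by auto

lemma finite_I: "finite (f ` I)" unfolding I_def by simp

end


theorem lemma5:
  fixes n :: nat
  assumes "prime n" and "odd n"
  defines "\<omega> \<equiv> exp (2 * of_real pi * \<i> / of_nat n)"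
  defines "A \<equiv> {complex_of_real (Re (\<omega> ^ k)) | k. 1 \<le> k \<and> k \<le> (n - 1) div 2}"
  defines "B \<equiv> {\<i> * complex_of_real (Im (\<omega> ^ k)) | k. 1 \<le> k \<and> k \<le> (n - 1) div 2}"
  shows "rat_basis (A \<union> B) (rat_adjoin \<omega>)"
proof -
  interpret cyc n using assms(1,2) by unfold_locales
  have om: "\<omega> = w" unfolding \<omega>_def w_def ..
  have AB': "A \<union> B = f ` I" unfolding A_def B_def om by (rule AB)
  show ?thesis
    unfolding rat_basis_def AB' om
  proof (intro conjI allI impI ballI)
    show "finite (f ` I)" by (rule finite_I)
    show "f ` I \<subseteq> rat_adjoin w" by (rule sub)
  next
    fix c :: "complex \<Rightarrow> rat" and x
    assume "(\<Sum>x\<in>f ` I. of_rat (c x) * x) = 0" "x \<in> f ` I"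
    then show "c x = 0" by (rule indep)
  next
    fix z assume "z \<in> rat_adjoin w"
    then show "\<exists>c. z = (\<Sum>x\<in>f ` I. of_rat (c x) * x)" by (rule span)
  qed
qed

end
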